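(* Suppose $X$ is a polyhedron and let $\beta\in\mathcal{A}$. Let $P=-\mathcal{A}^TX+N_\beta^\circ$ (Minkowski sum). Then a vector $\nu\in N_\beta\setminus\{0\}$ is an $X$-circuit of $\mathcal{A}$ if and only if $\operatorname{cone}\{\nu\}=\{t\nu:t\ge0\}$ is a ray (one-dimensional cone) of the outer normal fan $\mathcal{O}(P)$. Consequently, when $X$ is polyhedral there are only finitely many normalized $X$-circuits of $\mathcal{A}$.
   Context: $X\subset\mathbb{R}^n$ is a nonempty closed convex set and $\mathcal{A}\subset\mathbb{R}^n$ is a nonempty finite set. $\mathbb{R}^{\mathcal{A}}$ denotes real vectors indexed by $\mathcal{A}$. $\mathcal{A}$ is viewed as the linear map $\mathbb{R}^{\mathcal{A}}\to\mathbb{R}^n$, $\mathcal{A}\nu=\sum_{\alpha\in\mathcal{A}}\alpha\nu_\alpha$, with adjoint $\mathcal{A}^T:\mathbb{R}^n\to\mathbb{R}^{\mathcal{A}}$, $(\mathcal{A}^Tx)_\alpha=\alpha^Tx$. The support function of a convex set $S$ is $\sigma_S(y)=\sup\{y^Tx:x\in S\}\in\mathbb{R}\cup\{+\infty\}$. For $\beta\in\mathcal{A}$, $N_\beta=\{\nu\in\mathbb{R}^{\mathcal{A}}:\nu_\alpha\ge0\ \forall\alpha\neq\beta,\ \sum_{\alpha}\nu_\alpha=0\}$, and $N_\beta^\circ=\{w:w^T\nu\le0\ \forall\nu\in N_\beta\}$ is its polar. A vector $\nu^\star\in N_\beta$ is an $X$-circuit of $\mathcal{A}$ if (1) $\nu^\star\neq0$,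 (2) $\sigma_X(-\mathcal{A}\nu^\star)<\infty$, and (3) $\nu^\star$ cannot be written as a convex combination of two non-proportional vectors $\nu^{(1)},\nu^{(2)}\in N_\beta$ such that the map $\nu\mapsto\sigma_X(-\mathcal{A}\nu)$ is affine on the segment $[\nu^{(1)},\nu^{(2)}]$. An $X$-circuit $\lambda\in N_\beta$ is normalized if $\lambda_\beta=-1$. For a polyhedron $P$ and a face $F$ of $P$, the outer normal cone is $\mathsf{N}_P(F)=\{w:z^Tw=\sigma_P(w)\ \forall z\in F\}$, and the outer normal fan is $\mathcal{O}(P)=\{\mathsf{N}_P(F):F\text{ a face of }P\}$. *)

theory Defs
  imports "HOL-Analysis.Analysis"
begin

text \<open>The finite set A is represented by an injective map a from a finite index type 'm
  into R^n; R^A is then real^'m.  The linear map A and its adjoint:\<close>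

definition Amap :: "('m::finite \<Rightarrow> real^'n) \<Rightarrow> real^'m \<Rightarrow> real^'n" where
  "Amap a \<nu> = (\<Sum>i\<in>UNIV. (\<nu> $ i) *\<^sub>R a i)"

definition Atrans :: "('m::finite \<Rightarrow> real^'n) \<Rightarrow> real^'n \<Rightarrow> real^'m" where
  "Atrans a x = (\<chi> i. a i \<bullet> x)"

definition supp_fun :: "'a::real_inner set \<Rightarrow> 'a \<Rightarrow> ereal" where
  "supp_fun S y = (SUP x\<in>S. ereal (y \<bullet> x))"

definition Ncone :: "'m::finite \<Rightarrow> (real^'m) set" where
  "Ncone b = {\<nu>. (\<forall>i. i \<noteq> b \<longrightarrow> 0 \<le> \<nu> $ i) \<and> (\<Sum>i\<in>UNIV. \<nu> $ i) = 0}"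

definition polar :: "'a::real_inner set \<Rightarrow> 'a set" where
  "polar C = {w. \<forall>\<nu>\<in>C. w \<bullet> \<nu> \<le> 0}"

definition proportional :: "'a::real_vector \<Rightarrow> 'a \<Rightarrow> bool" where
  "proportional u v \<longleftrightarrow> (\<exists>c. u = c *\<^sub>R v) \<or> (\<exists>c. v = c *\<^sub>R u)"

definition affine_on_segment :: "('a::real_vector \<Rightarrow> ereal) \<Rightarrow> 'a \<Rightarrow> 'a \<Rightarrow> bool" where
  "affine_on_segment g u v \<longleftrightarrow>
     (\<exists>c d::real. \<forall>s\<in>{0..1}. g ((1 - s) *\<^sub>R u + s *\<^sub>R v) = ereal (c + s * d))"

definition X_circuit ::
  "(real^'n) set \<Rightarrow> ('m::finite \<Rightarrow> real^'n) \<Rightarrow> 'm \<Rightarrow> real^'m \<Rightarrow> bool" where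
  "X_circuit X a b \<nu> \<longleftrightarrow>
     \<nu> \<in> Ncone b \<and> \<nu> \<noteq> 0 \<and>
     supp_fun X (- Amap a \<nu>) < \<infinity> \<and>
     \<not> (\<exists>\<nu>1 \<in> Ncone b. \<exists>\<nu>2 \<in> Ncone b. \<exists>t\<in>{0<..<1}.
            \<not> proportional \<nu>1 \<nu>2 \<and> \<nu> = (1 - t) *\<^sub>R \<nu>1 + t *\<^sub>R \<nu>2 \<and>
            affine_on_segment (\<lambda>\<mu>. supp_fun X (- Amap a \<mu>)) \<nu>1 \<nu>2)"

definition normal_cone_face :: "'a::real_inner set \<Rightarrow> 'a set \<Rightarrow> 'a set" where
  "normal_cone_face P F = {w. \<forall>z\<in>F. ereal (z \<bullet> w) = supp_fun P w}"

definition outer_normal_fan :: "'a::real_inner set \<Rightarrow> 'a set set" where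
  "outer_normal_fan P = {normal_cone_face P F | F. F face_of P}"

end

theory Submission
  imports Defs
begin

lemma eps_pick:
  fixes A B :: "'s \<Rightarrow> real"
  assumes "finite S" and "\<And>s. s \<in> S \<Longrightarrow> A s \<le> 0 \<and> B s \<le> 0 \<and> (A s = 0 \<longrightarrow> B s = 0)"
  shows "\<exists>e>0. \<forall>\<epsilon>. 0 < \<epsilon> \<and> \<epsilon> \<le> e \<longrightarrow> (\<forall>s\<in>S. A s - \<epsilon> * B s \<le> 0)"
proof -
  define e where "e = Min (insert 1 ((\<lambda>s. A s / B s) ` {s\<in>S. B s < 0}))"
  have fin: "finite (insert 1 ((\<lambda>s. A s / B s) ` {s\<in>S. B s < 0}))" using assms(1) by auto
  have pos: "\<forall>x\<in>insert 1 ((\<lambda>s. A s / B s) ` {s\<in>S. B s < 0}). 0 < x"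
  proof (intro ballI)
    fix x assume "x \<in> insert 1 ((\<lambda>s. A s / B s) ` {s\<in>S. B s < 0})"
    then consider "x = 1" | s where "s \<in> S" "B s < 0" "x = A s / B s" by auto
    then show "0 < x"
    proof cases
      case 2
      from assms(2)[OF 2(1)] 2(2) have "A s < 0" by force
      with 2 show ?thesis by (simp add: divide_neg_neg)
    qed simp
  qed
  have "e > 0" unfolding e_def using pos fin by (simp add: Min_gr_iff)
  moreover have "\<forall>\<epsilon>. 0 < \<epsilon> \<and> \<epsilon> \<le> e \<longrightarrow> (\<forall>s\<in>S. A s - \<epsilon> * B s \<le> 0)"
  proof (intro allI impI ballI)
    fix \<epsilon> s assume h: "0 < \<epsilon> \<and> \<epsilon> \<le> e" and s: "s \<in> S"
    show "A s - \<epsilon> * B s \<le> 0"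
    proof (cases "B s < 0")
      case True
      then have "e \<le> A s / B s" unfolding e_def using fin s by (intro Min_le) auto
      with h have "\<epsilon> \<le> A s / B s" by simp
      then have "(A s / B s) * B s \<le> \<epsilon> * B s" using True by (intro mult_right_mono_neg) auto
      with True show ?thesis by simp
    next
      case False
      with assms(2)[OF s] have "B s = 0" by simp
      with assms(2)[OF s] show ?thesis by simp
    qed
  qed
  ultimately show ?thesis by blast
qed

lemma cone_separate:
  fixes v :: "'a::euclidean_space"
  assumes "finite R" and "v \<notin> convex_cone hull R"
  shows "\<exists>z. (\<forall>x\<in>convex_cone hull R. z \<bullet> x \<le> 0) \<and> z \<bullet> v > 0"
proof -
  have cl: "closed (convex_cone hull R)" using assms(1) by (rule closed_convex_cone_hull)
  have cv: "convex (convex_cone hull R)" by (simp add: convex_convex_cone_hull)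
  obtain c e where ce: "c \<bullet> v < e" "\<forall>x\<in>convex_cone hull R. e < c \<bullet> x"
    using separating_hyperplane_closed_point[OF cv cl assms(2)] by blast
  have e0: "e < 0" using ce(2) convex_cone_hull_contains_0 by force
  have nn: "c \<bullet> x \<ge> 0" if x: "x \<in> convex_cone hull R" for x
  proof (rule ccontr)
    assume "\<not> c \<bullet> x \<ge> 0"
    then have neg: "c \<bullet> x < 0" by simp
    define t where "t = e / (c \<bullet> x)"
    have t0: "t \<ge> 0" unfolding t_def using e0 neg by (simp add: divide_nonpos_neg)
    have "t *\<^sub>R x \<in> convex_cone hull R" using convex_cone_hull_mul[OF x t0] .
    then have "e < c \<bullet> (t *\<^sub>R x)" using ce(2) by blast
    also have "c \<bullet> (t *\<^sub>R x) = e" unfolding t_def using neg by simp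
    finally show False by simp
  qed
  show ?thesis
    by (rule exI[of _ "-c"]) (use nn ce e0 in auto)
qed

lemma weyl:
  fixes G :: "'a::euclidean_space set"
  assumes "finite G"
  shows "\<exists>R. finite R \<and> {v. \<forall>g\<in>G. g \<bullet> v \<le> 0} = convex_cone hull R"
proof -
  have "polyhedron (convex_cone hull G)" using assms by (rule polyhedron_convex_cone_hull)
  then obtain F a b where "finite F"
    and F: "convex_cone hull G = \<Inter> F"
    and ab: "\<And>h. h \<in> F \<Longrightarrow> a h \<noteq> 0 \<and> h = {x. a h \<bullet> x \<le> b h}"
    unfolding polyhedron_def by metis
  let ?K = "convex_cone hull G"
  have K: "?K = {u. \<forall>h\<in>F. a h \<bullet> u \<le> 0}"
  proof
    show "?K \<subseteq> {u. \<forall>h\<in>F. a h \<bullet> u \<le> 0}"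
    proof (clarify)
      fix u h assume u: "u \<in> ?K" and h: "h \<in> F"
      show "a h \<bullet> u \<le> 0"
      proof (rule ccontr)
        assume "\<not> a h \<bullet> u \<le> 0"
        then have pos: "a h \<bullet> u > 0" by simp
        define t where "t = (\<bar>b h\<bar> + 1) / (a h \<bullet> u)"
        have "t \<ge> 0" unfolding t_def using pos by simp
        then have "t *\<^sub>R u \<in> ?K" using convex_cone_hull_mul[OF u] by blast
        then have "t *\<^sub>R u \<in> h" using F h by blast
        then have "a h \<bullet> (t *\<^sub>R u) \<le> b h" using ab[OF h] by blast
        moreover have "a h \<bullet> (t *\<^sub>R u) = \<bar>b h\<bar> + 1" unfolding t_def using pos by simp
        ultimately show False by simp
      qed
    qed
    show "{u. \<forall>h\<in>F. a h \<bullet> u \<le> 0} \<subseteq> ?K"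
    proof clarify
      fix u assume u: "\<forall>h\<in>F. a h \<bullet> u \<le> 0"
      have "u \<in> h" if h: "h \<in> F" for h
      proof -
        have "0 \<in> h" using F h convex_cone_hull_contains_0 by blast
        have hh: "h = {x. a h \<bullet> x \<le> b h}" using ab[OF h] by blast
        have "0 \<in> {x. a h \<bullet> x \<le> b h}" using \<open>0 \<in> h\<close> hh by metis
        then have "0 \<le> b h" by simp
        then have "u \<in> {x. a h \<bullet> x \<le> b h}" using u h by force
        then show ?thesis using hh by metis
      qed
      then show "u \<in> ?K" using F by blast
    qed
  qed
  let ?R = "a ` F"
  have "{v. \<forall>g\<in>G. g \<bullet> v \<le> 0} = convex_cone hull ?R"
  proof
    show "convex_cone hull ?R \<subseteq> {v. \<forall>g\<in>G. g \<bullet> v \<le> 0}"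
    proof (rule hull_minimal)
      show "?R \<subseteq> {v. \<forall>g\<in>G. g \<bullet> v \<le> 0}"
      proof clarify
        fix h g assume h: "h \<in> F" and g: "g \<in> G"
        have "g \<in> ?K" by (simp add: g hull_inc)
        then have "a h \<bullet> g \<le> 0" using K h by blast
        then show "g \<bullet> a h \<le> 0" by (simp add: inner_commute)
      qed
      have "{v. \<forall>g\<in>G. g \<bullet> v \<le> 0} = \<Inter> ((\<lambda>g. {v. g \<bullet> v \<le> 0}) ` G)" by auto
      moreover have "convex_cone (\<Inter> ((\<lambda>g. {v. g \<bullet> v \<le> 0}) ` G))"
        by (rule convex_cone_Inter) (auto intro: convex_cone_halfspace_le)
      ultimately show "convex_cone {v. \<forall>g\<in>G. g \<bullet> v \<le> 0}" by simp
    qed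
    show "{v. \<forall>g\<in>G. g \<bullet> v \<le> 0} \<subseteq> convex_cone hull ?R"
    proof
      fix v assume v: "v \<in> {v. \<forall>g\<in>G. g \<bullet> v \<le> 0}"
      show "v \<in> convex_cone hull ?R"
      proof (rule ccontr)
        assume "v \<notin> convex_cone hull ?R"
        then obtain z where z: "\<forall>x\<in>convex_cone hull ?R. z \<bullet> x \<le> 0" "z \<bullet> v > 0"
          using cone_separate[of ?R v] \<open>finite F\<close> by blast
        have "a h \<bullet> z \<le> 0" if h: "h \<in> F" for h
        proof -
          have "a h \<in> convex_cone hull ?R" using h by (intro hull_inc) blast
          then have "z \<bullet> a h \<le> 0" using z(1) by blast
          then show ?thesis by (simp add: inner_commute)
        qed
        then have "z \<in> ?K" unfolding K by blast
        moreover have "?K \<subseteq> {u. v \<bullet> u \<le> 0}"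
        proof (rule hull_minimal)
          show "G \<subseteq> {u. v \<bullet> u \<le> 0}"
          proof
            fix g assume "g \<in> G"
            then have "g \<bullet> v \<le> 0" using v by blast
            then show "g \<in> {u. v \<bullet> u \<le> 0}" by (simp add: inner_commute)
          qed
        qed (rule convex_cone_halfspace_le)
        ultimately have "v \<bullet> z \<le> 0" by blast
        with z(2) show False by (simp add: inner_commute)
      qed
    qed
  qed
  then show ?thesis using \<open>finite F\<close> by blast
qed

lemma rep:
  fixes X :: "'a::euclidean_space set"
  assumes "polyhedron X" "X \<noteq> {}"
  shows "\<exists>V R. finite V \<and> V \<noteq> {} \<and> V \<subseteq> X \<and> finite R \<and>
           (\<forall>x\<in>X. \<forall>r\<in>R. \<forall>t\<ge>0. x + t *\<^sub>R r \<in> X) \<and>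
           (\<forall>y. (\<forall>r\<in>R. y \<bullet> r \<le> 0) \<longrightarrow> (\<forall>x\<in>X. \<exists>v\<in>V. y \<bullet> x \<le> y \<bullet> v))"
proof -
  obtain F a b where "finite F" and XF: "X = \<Inter>F"
    and ab: "\<And>h. h \<in> F \<Longrightarrow> a h \<noteq> 0 \<and> h = {x. a h \<bullet> x \<le> b h}"
    using assms(1) unfolding polyhedron_def by metis
  have memX: "x \<in> X \<longleftrightarrow> (\<forall>h\<in>F. a h \<bullet> x \<le> b h)" for x
  proof -
    have "x \<in> h \<longleftrightarrow> a h \<bullet> x \<le> b h" if h: "h \<in> F" for h
    proof -
      have hh: "h = {x. a h \<bullet> x \<le> b h}" using ab[OF h] by blast
      have "(x \<in> h) = (x \<in> {x. a h \<bullet> x \<le> b h})" using arg_cong[where f="\<lambda>S. x \<in> S", OF hh] .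
      then show ?thesis by simp
    qed
    then show ?thesis using XF by blast
  qed
  define G' :: "('a \<times> real) set" where "G' = (\<lambda>h. (a h, - b h)) ` F \<union> {(0, -1)}"
  have "finite G'" using \<open>finite F\<close> unfolding G'_def by simp
  then obtain W where fW: "finite W" and CW: "{v. \<forall>g\<in>G'. g \<bullet> v \<le> 0} = convex_cone hull W"
    using weyl by blast
  have memC: "(x, t) \<in> convex_cone hull W \<longleftrightarrow> (\<forall>h\<in>F. a h \<bullet> x \<le> b h * t) \<and> 0 \<le> t" for x t
  proof -
    have "(x, t) \<in> convex_cone hull W \<longleftrightarrow> (\<forall>g\<in>G'. g \<bullet> (x, t) \<le> 0)"
      using CW by blast
    also have "\<dots> \<longleftrightarrow> (\<forall>h\<in>F. a h \<bullet> x \<le> b h * t) \<and> 0 \<le> t"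
      unfolding G'_def by (auto simp: inner_real_def algebra_simps)
    finally show ?thesis .
  qed
  have Wmem: "(\<forall>h\<in>F. a h \<bullet> fst w \<le> b h * snd w) \<and> 0 \<le> snd w" if "w \<in> W" for w
  proof -
    have "w \<in> convex_cone hull W" using that by (rule hull_inc)
    then show ?thesis using memC[of "fst w" "snd w"] by simp
  qed
  define V where "V = (\<lambda>w. (1 / snd w) *\<^sub>R fst w) ` {w\<in>W. snd w > 0}"
  define R where "R = fst ` {w\<in>W. snd w = 0}"
  have "finite V" "finite R" using fW unfolding V_def R_def by auto
  have VX: "V \<subseteq> X"
  proof
    fix v assume "v \<in> V"
    then obtain w where w: "w \<in> W" "snd w > 0" "v = (1 / snd w) *\<^sub>R fst w" unfolding V_def by blast
    have "a h \<bullet> v \<le> b h" if h: "h \<in> F" for h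
    proof -
      have "a h \<bullet> fst w \<le> b h * snd w" using Wmem[OF w(1)] h by blast
      then have "(a h \<bullet> fst w) / snd w \<le> b h" using w(2) by (simp add: divide_le_eq)
      then show ?thesis using w(3) by simp
    qed
    then show "v \<in> X" using memX by blast
  qed
  have rec: "\<forall>x\<in>X. \<forall>r\<in>R. \<forall>t\<ge>0. x + t *\<^sub>R r \<in> X"
  proof (intro ballI allI impI)
    fix x r and t :: real assume x: "x \<in> X" and r: "r \<in> R" and t: "0 \<le> t"
    obtain w where w: "w \<in> W" "snd w = 0" "r = fst w" using r unfolding R_def by blast
    have "a h \<bullet> (x + t *\<^sub>R r) \<le> b h" if h: "h \<in> F" for h
    proof -
      have "a h \<bullet> r \<le> 0" using Wmem[OF w(1)] h w by simp
      then have "t * (a h \<bullet> r) \<le> 0" using t by (simp add: mult_nonneg_nonpos)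
      moreover have "a h \<bullet> x \<le> b h" using x h memX by blast
      ultimately show ?thesis by (simp add: inner_add_right)
    qed
    then show "x + t *\<^sub>R r \<in> X" using memX by blast
  qed
  have "V \<noteq> {}"
  proof
    assume V0: "V = {}"
    obtain z where z: "z \<in> X" using assms(2) by blast
    have "(z, 1) \<in> convex_cone hull W" using memC z memX by simp
    moreover have "convex_cone hull W \<subseteq> {p. ((0::'a), (1::real)) \<bullet> p \<le> 0}"
    proof (rule hull_minimal)
      show "W \<subseteq> {p. ((0::'a), (1::real)) \<bullet> p \<le> 0}"
      proof
        fix w assume w: "w \<in> W"
        have "\<not> snd w > 0" using V0 w unfolding V_def by blast
        then show "w \<in> {p. ((0::'a), (1::real)) \<bullet> p \<le> 0}"
          by (cases w) (simp add: inner_real_def)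
      qed
    qed (rule convex_cone_halfspace_le)
    ultimately have "(z, 1) \<in> {p. ((0::'a), (1::real)) \<bullet> p \<le> 0}" by blast
    then show False by simp
  qed
  have main: "\<forall>y. (\<forall>r\<in>R. y \<bullet> r \<le> 0) \<longrightarrow> (\<forall>x\<in>X. \<exists>v\<in>V. y \<bullet> x \<le> y \<bullet> v)"
  proof (intro allI impI ballI)
    fix y x assume yR: "\<forall>r\<in>R. y \<bullet> r \<le> 0" and x: "x \<in> X"
    define M where "M = Max ((\<lambda>v. y \<bullet> v) ` V)"
    have finM: "finite ((\<lambda>v. y \<bullet> v) ` V)" "(\<lambda>v. y \<bullet> v) ` V \<noteq> {}"
      using \<open>finite V\<close> \<open>V \<noteq> {}\<close> by auto
    obtain v0 where v0: "v0 \<in> V" "y \<bullet> v0 = M"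
      using Max_in[OF finM] unfolding M_def by auto
    have Mge: "y \<bullet> v \<le> M" if "v \<in> V" for v
      unfolding M_def using finM(1) that by (intro Max_ge) auto
    have "convex_cone hull W \<subseteq> {p. (y, -M) \<bullet> p \<le> 0}"
    proof (rule hull_minimal)
      show "W \<subseteq> {p. (y, -M) \<bullet> p \<le> 0}"
      proof
        fix w assume w: "w \<in> W"
        obtain x' t' where xt: "w = (x', t')" by (cases w)
        have t0: "0 \<le> t'" using Wmem[OF w] xt by simp
        have "y \<bullet> x' \<le> M * t'"
        proof (cases "t' > 0")
          case True
          then have "(1 / t') *\<^sub>R x' \<in> V" unfolding V_def using w xt by force
          then have "y \<bullet> ((1 / t') *\<^sub>R x') \<le> M" by (rule Mge)
          then have "(y \<bullet> x') / t' \<le> M" by simp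
          then show ?thesis using True by (simp add: divide_le_eq mult.commute)
        next
          case False
          then have "t' = 0" using t0 by simp
          then have "x' \<in> R" unfolding R_def using w xt by force
          then show ?thesis using yR \<open>t' = 0\<close> by simp
        qed
        then show "w \<in> {p. (y, -M) \<bullet> p \<le> 0}" using xt by (simp add: inner_real_def)
      qed
    qed (rule convex_cone_halfspace_le)
    moreover have "(x, 1) \<in> convex_cone hull W" using memC x memX by simp
    ultimately have "y \<bullet> x \<le> M" by (force simp: inner_real_def)
    then show "\<exists>v\<in>V. y \<bullet> x \<le> y \<bullet> v" using v0 by auto
  qed
  show ?thesis using \<open>finite V\<close> \<open>V \<noteq> {}\<close> VX \<open>finite R\<close> rec main by blast
qed

lemma rec_nonpos:
  fixes x r y :: "'a::real_inner"
  assumes "\<forall>t\<ge>0. x + t *\<^sub>R r \<in> X" and "\<forall>x\<in>X. y \<bullet> x \<le> m"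
  shows "y \<bullet> r \<le> 0"
proof (rule ccontr)
  assume "\<not> y \<bullet> r \<le> 0"
  then have pos: "y \<bullet> r > 0" by simp
  define t where "t = (\<bar>m - y \<bullet> x\<bar> + 1) / (y \<bullet> r)"
  have "t \<ge> 0" unfolding t_def using pos by simp
  then have "y \<bullet> (x + t *\<^sub>R r) \<le> m" using assms by blast
  moreover have "y \<bullet> (x + t *\<^sub>R r) = y \<bullet> x + \<bar>m - y \<bullet> x\<bar> + 1"
    unfolding t_def using pos by (simp add: inner_add_right)
  ultimately show False by linarith
qed

lemma attain_bdd:
  fixes X :: "'a::euclidean_space set"
  assumes "polyhedron X" "X \<noteq> {}" "\<forall>x\<in>X. y \<bullet> x \<le> m"
  shows "\<exists>z\<in>X. \<forall>x\<in>X. y \<bullet> x \<le> y \<bullet> z"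
proof -
  obtain V R where V: "finite V" "V \<noteq> {}" "V \<subseteq> X" and "finite R"
    and rec: "\<forall>x\<in>X. \<forall>r\<in>R. \<forall>t\<ge>0. x + t *\<^sub>R r \<in> X"
    and main: "\<forall>y. (\<forall>r\<in>R. y \<bullet> r \<le> 0) \<longrightarrow> (\<forall>x\<in>X. \<exists>v\<in>V. y \<bullet> x \<le> y \<bullet> v)"
    using rep[OF assms(1,2)] by blast
  obtain x0 where x0: "x0 \<in> X" using assms(2) by blast
  have "\<forall>r\<in>R. y \<bullet> r \<le> 0"
    using rec x0 assms(3) by (intro ballI rec_nonpos[of x0 _ X y m]) auto
  then have m2: "\<forall>x\<in>X. \<exists>v\<in>V. y \<bullet> x \<le> y \<bullet> v" using main by blast
  define M where "M = Max ((\<lambda>v. y \<bullet> v) ` V)"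
  have finM: "finite ((\<lambda>v. y \<bullet> v) ` V)" "(\<lambda>v. y \<bullet> v) ` V \<noteq> {}" using V by auto
  obtain v0 where v0: "v0 \<in> V" "y \<bullet> v0 = M" using Max_in[OF finM] unfolding M_def by auto
  have Mge: "y \<bullet> v \<le> M" if "v \<in> V" for v
    unfolding M_def using finM(1) that by (intro Max_ge) auto
  show ?thesis
  proof (rule bexI[of _ v0])
    show "v0 \<in> X" using v0 V by blast
    show "\<forall>x\<in>X. y \<bullet> x \<le> y \<bullet> v0"
    proof
      fix x assume "x \<in> X"
      then obtain v where "v \<in> V" "y \<bullet> x \<le> y \<bullet> v" using m2 by blast
      then show "y \<bullet> x \<le> y \<bullet> v0" using Mge v0 by force
    qed
  qed
qed

lemma core:
  fixes X :: "'a::euclidean_space set"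
  assumes "polyhedron X" "z \<in> X" and ymax: "\<forall>x\<in>X. y \<bullet> x \<le> y \<bullet> z"
    and dmax: "\<forall>x\<in>X. d \<bullet> x \<le> d \<bullet> z" and yd: "\<forall>x\<in>X. y \<bullet> x = y \<bullet> z \<longrightarrow> d \<bullet> x = d \<bullet> z"
  shows "\<exists>e>0. \<forall>\<epsilon>. 0 < \<epsilon> \<and> \<epsilon> \<le> e \<longrightarrow> (\<forall>x\<in>X. (y - \<epsilon> *\<^sub>R d) \<bullet> x \<le> (y - \<epsilon> *\<^sub>R d) \<bullet> z)"
proof -
  have "X \<noteq> {}" using assms(2) by blast
  obtain V R where V: "finite V" "V \<noteq> {}" "V \<subseteq> X" and "finite R"
    and rec: "\<forall>x\<in>X. \<forall>r\<in>R. \<forall>t\<ge>0. x + t *\<^sub>R r \<in> X"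
    and main: "\<forall>y. (\<forall>r\<in>R. y \<bullet> r \<le> 0) \<longrightarrow> (\<forall>x\<in>X. \<exists>v\<in>V. y \<bullet> x \<le> y \<bullet> v)"
    using rep[OF assms(1) \<open>X \<noteq> {}\<close>] by blast
  have condR: "y \<bullet> r \<le> 0 \<and> d \<bullet> r \<le> 0 \<and> (y \<bullet> r = 0 \<longrightarrow> d \<bullet> r = 0)" if r: "r \<in> R" for r
  proof (intro conjI impI)
    have rz: "\<forall>t\<ge>0. z + t *\<^sub>R r \<in> X" using rec r assms(2) by blast
    show "y \<bullet> r \<le> 0" using rec_nonpos[OF rz ymax] .
    show "d \<bullet> r \<le> 0" using rec_nonpos[OF rz dmax] .
    assume "y \<bullet> r = 0"
    have zr: "z + r \<in> X" using rz[rule_format, of 1] by simp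
    have "y \<bullet> (z + r) = y \<bullet> z" using \<open>y \<bullet> r = 0\<close> by (simp add: inner_add_right)
    then have "d \<bullet> (z + r) = d \<bullet> z" using yd zr by blast
    then show "d \<bullet> r = 0" by (simp add: inner_add_right)
  qed
  obtain e1 where e1: "e1 > 0" "\<forall>\<epsilon>. 0 < \<epsilon> \<and> \<epsilon> \<le> e1 \<longrightarrow> (\<forall>r\<in>R. y \<bullet> r - \<epsilon> * (d \<bullet> r) \<le> 0)"
    using eps_pick[of R "\<lambda>r. y \<bullet> r" "\<lambda>r. d \<bullet> r"] \<open>finite R\<close> condR by blast
  have condV: "y \<bullet> v - y \<bullet> z \<le> 0 \<and> d \<bullet> v - d \<bullet> z \<le> 0 \<and> (y \<bullet> v - y \<bullet> z = 0 \<longrightarrow> d \<bullet> v - d \<bullet> z = 0)"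
    if v: "v \<in> V" for v
    using V(3) v ymax dmax yd by auto
  obtain e2 where e2: "e2 > 0"
    "\<forall>\<epsilon>. 0 < \<epsilon> \<and> \<epsilon> \<le> e2 \<longrightarrow> (\<forall>v\<in>V. (y \<bullet> v - y \<bullet> z) - \<epsilon> * (d \<bullet> v - d \<bullet> z) \<le> 0)"
    using eps_pick[of V "\<lambda>v. y \<bullet> v - y \<bullet> z" "\<lambda>v. d \<bullet> v - d \<bullet> z"] V(1) condV by blast
  show ?thesis
  proof (intro exI[of _ "min e1 e2"] conjI allI impI ballI)
    show "0 < min e1 e2" using e1 e2 by simp
    fix \<epsilon> x assume h: "0 < \<epsilon> \<and> \<epsilon> \<le> min e1 e2" and x: "x \<in> X"
    have "\<forall>r\<in>R. (y - \<epsilon> *\<^sub>R d) \<bullet> r \<le> 0"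
      using e1(2) h by (simp add: inner_diff_left)
    then obtain v where v: "v \<in> V" "(y - \<epsilon> *\<^sub>R d) \<bullet> x \<le> (y - \<epsilon> *\<^sub>R d) \<bullet> v"
      using main x by blast
    have "(y \<bullet> v - y \<bullet> z) - \<epsilon> * (d \<bullet> v - d \<bullet> z) \<le> 0" using e2(2) h v(1) by simp
    then have "(y - \<epsilon> *\<^sub>R d) \<bullet> v \<le> (y - \<epsilon> *\<^sub>R d) \<bullet> z"
      by (simp add: inner_diff_left algebra_simps)
    with v(2) show "(y - \<epsilon> *\<^sub>R d) \<bullet> x \<le> (y - \<epsilon> *\<^sub>R d) \<bullet> z" by linarith
  qed
qed



lemma Amap_adj: "Atrans a x \<bullet> w = x \<bullet> Amap a w"
proof -
  have 1: "Atrans a x \<bullet> w = (\<Sum>i\<in>UNIV. (a i \<bullet> x) * w $ i)"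
    unfolding Atrans_def by (simp add: inner_vec_def[of "\<chi> i. a i \<bullet> x" w])
  have 2: "x \<bullet> Amap a w = (\<Sum>i\<in>UNIV. w $ i * (x \<bullet> a i))"
    by (simp add: Amap_def inner_sum_right)
  show ?thesis unfolding 1 2 by (rule sum.cong) (simp_all add: inner_commute)
qed

lemma linear_Amap: "linear (Amap a)"
  by (rule linearI) (simp_all add: Amap_def scaleR_add_left sum.distrib scaleR_sum_right)

lemma Amap_lin: "Amap a (u + k *\<^sub>R v) = Amap a u + k *\<^sub>R Amap a v"
  using linear_Amap[of a] by (simp add: linear_add linear_scale)

lemma linear_negAtrans: "linear (\<lambda>x. - Atrans a x)"
  by (rule linearI) (simp_all add: Atrans_def vec_eq_iff inner_add_right)

lemma Ncone_0: "0 \<in> Ncone b"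
  unfolding Ncone_def by simp

lemma Ncone_add: "u \<in> Ncone b \<Longrightarrow> v \<in> Ncone b \<Longrightarrow> u + v \<in> Ncone b"
  unfolding Ncone_def by (simp add: sum.distrib)

lemma Ncone_scale: "u \<in> Ncone b \<Longrightarrow> 0 \<le> c \<Longrightarrow> c *\<^sub>R u \<in> Ncone b"
  unfolding Ncone_def by (simp add: sum_distrib_left[symmetric])

lemma Ncone_sum_b: "u \<in> Ncone b \<Longrightarrow> u $ b = - (\<Sum>i\<in>UNIV - {b}. u $ i)"
  unfolding Ncone_def using sum.remove[of UNIV b "\<lambda>i. u $ i"] by simp

lemma Ncone_pointed:
  assumes "u \<in> Ncone b" "k *\<^sub>R u \<in> Ncone b" "k < 0"
  shows "u = 0"
proof -
  have "u $ i = 0" if "i \<noteq> b" for i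
  proof -
    have "0 \<le> u $ i" "0 \<le> k * u $ i" using assms(1,2) that unfolding Ncone_def by auto
    then show ?thesis using assms(3) by (simp add: zero_le_mult_iff)
  qed
  moreover then have "u $ b = 0" using Ncone_sum_b[OF assms(1)] by simp
  ultimately show ?thesis by (metis vec_eq_iff zero_index)
qed

lemma polar_0: "0 \<in> polar C"
  unfolding polar_def by simp

lemma polar_convex: "convex (polar C)"
  unfolding polar_def convex_def
  by (auto simp: inner_add_left intro!: add_nonpos_nonpos mult_nonneg_nonpos)

lemma polar_scale: "q \<in> polar C \<Longrightarrow> 0 \<le> t \<Longrightarrow> t *\<^sub>R q \<in> polar C"
  unfolding polar_def by (auto intro: mult_nonneg_nonpos)

lemma axis_Ncone:
  assumes "i \<noteq> b" shows "axis i 1 - axis b 1 \<in> Ncone b"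
proof -
  have "(\<Sum>j\<in>UNIV. (axis i 1 - axis b (1::real)) $ j) = 0"
    by (simp add: sum_subtractf axis_def)
  then show ?thesis unfolding Ncone_def using assms by (auto simp: axis_def)
qed

lemma polar_Ncone:
  fixes b :: "'m::finite"
  shows "polar (Ncone b) = {q::real^'m. \<forall>i. i \<noteq> b \<longrightarrow> q $ i \<le> q $ b}"
proof
  show "polar (Ncone b) \<subseteq> {q. \<forall>i. i \<noteq> b \<longrightarrow> q $ i \<le> q $ b}"
  proof clarify
    fix q i assume q: "q \<in> polar (Ncone b)" and i: "i \<noteq> b"
    have "q \<bullet> (axis i 1 - axis b 1) \<le> 0" using q axis_Ncone[OF i] unfolding polar_def by blast
    then show "q $ i \<le> q $ b" by (simp add: inner_diff_right inner_axis)
  qed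
  show "{q. \<forall>i. i \<noteq> b \<longrightarrow> q $ i \<le> q $ b} \<subseteq> polar (Ncone b)"
  proof (clarify, unfold polar_def, clarify)
    fix q \<nu> :: "real^'m" assume q: "\<forall>i. i \<noteq> b \<longrightarrow> q $ i \<le> q $ b" and \<nu>: "\<nu> \<in> Ncone b"
    have "q \<bullet> \<nu> = (\<Sum>i\<in>UNIV. (q $ i - q $ b) * \<nu> $ i) + q $ b * (\<Sum>i\<in>UNIV. \<nu> $ i)"
      by (simp add: inner_vec_def algebra_simps sum.distrib sum_distrib_left sum_subtractf)
    also have "\<dots> = (\<Sum>i\<in>UNIV. (q $ i - q $ b) * \<nu> $ i)" using \<nu> unfolding Ncone_def by simp
    also have "\<dots> \<le> 0"
    proof (rule sum_nonpos)
      fix i :: 'm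
      show "(q $ i - q $ b) * \<nu> $ i \<le> 0"
      proof (cases "i = b")
        case False
        then show ?thesis using q \<nu> unfolding Ncone_def by (auto intro: mult_nonpos_nonneg)
      qed simp
    qed
    finally show "q \<bullet> \<nu> \<le> 0" .
  qed
qed

lemma polyhedron_polar_Ncone: "polyhedron (polar (Ncone (b::'m::finite)))"
proof -
  have "polar (Ncone b) = \<Inter> ((\<lambda>i. {q::real^'m. (axis i 1 - axis b 1) \<bullet> q \<le> 0}) ` {i. i \<noteq> b})"
    unfolding polar_Ncone by (auto simp: inner_diff_left inner_axis')
  moreover have "polyhedron (\<Inter> ((\<lambda>i. {q::real^'m. (axis i 1 - axis b 1) \<bullet> q \<le> 0}) ` {i. i \<noteq> b}))"
    by (rule polyhedron_Inter) (auto intro: polyhedron_halfspace_le)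
  ultimately show ?thesis by simp
qed


lemma SUP_attain:
  assumes "z \<in> S" "\<forall>x\<in>S. g x \<le> g z"
  shows "(SUP x\<in>S. ereal (g x)) = ereal (g z)"
  by (rule antisym) (use assms in \<open>auto intro!: SUP_least SUP_upper2[of z]\<close>)

lemma supp_bdd:
  assumes "S \<noteq> {}" "supp_fun S y < \<infinity>"
  shows "\<exists>m. \<forall>x\<in>S. y \<bullet> x \<le> m"
proof -
  obtain x0 where x0: "x0 \<in> S" using assms(1) by blast
  have ge: "ereal (y \<bullet> x) \<le> supp_fun S y" if "x \<in> S" for x
    unfolding supp_fun_def using that by (rule SUP_upper)
  have "supp_fun S y \<noteq> -\<infinity>" using ge[OF x0] by auto
  moreover have "supp_fun S y \<noteq> \<infinity>" using assms(2) by simp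
  ultimately obtain m where m: "supp_fun S y = ereal m" by (cases "supp_fun S y") auto
  show ?thesis using ge m by auto
qed

lemma inner_P: "w \<bullet> (- Atrans a x + q) = x \<bullet> (- Amap a w) + w \<bullet> q"
proof -
  have "w \<bullet> Atrans a x = x \<bullet> Amap a w" using Amap_adj by (metis inner_commute)
  then show ?thesis by (simp add: inner_add_right inner_diff_right)
qed

lemma memP:
  assumes P: "P = {p + q | p q. p \<in> (\<lambda>x. - Atrans a x) ` X \<and> q \<in> polar (Ncone b)}"
  shows "z \<in> P \<longleftrightarrow> (\<exists>x\<in>X. \<exists>q\<in>polar (Ncone b). z = - Atrans a x + q)"
  unfolding P by blast

lemma memP_I:
  assumes P: "P = {p + q | p q. p \<in> (\<lambda>x. - Atrans a x) ` X \<and> q \<in> polar (Ncone b)}"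
    and "x \<in> X" "q \<in> polar (Ncone b)"
  shows "- Atrans a x + q \<in> P"
  unfolding P using assms(2,3) by blast

lemma memP_E:
  assumes P: "P = {p + q | p q. p \<in> (\<lambda>x. - Atrans a x) ` X \<and> q \<in> polar (Ncone b)}"
    and "z \<in> P"
  obtains x q where "x \<in> X" "q \<in> polar (Ncone b)" "z = - Atrans a x + q"
  using assms(2) unfolding P by blast

lemma convex_P:
  assumes P: "P = {p + q | p q. p \<in> (\<lambda>x. - Atrans a x) ` X \<and> q \<in> polar (Ncone b)}"
    and "convex X"
  shows "convex P"
proof -
  have "P = (\<Union>x\<in> (\<lambda>x. - Atrans a x) ` X. \<Union>y \<in> polar (Ncone b). {x + y})" unfolding P by blast
  moreover have "convex ((\<lambda>x. - Atrans a x) ` X)"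
    using convex_linear_image[OF linear_negAtrans assms(2)] .
  ultimately show ?thesis using convex_sums polar_convex by metis
qed

lemma supp_P_N:
  assumes P: "P = {p + q | p q. p \<in> (\<lambda>x. - Atrans a x) ` X \<and> q \<in> polar (Ncone b)}"
    and w: "w \<in> Ncone b"
  shows "supp_fun P w = supp_fun X (- Amap a w)"
proof (rule antisym)
  show "supp_fun P w \<le> supp_fun X (- Amap a w)"
    unfolding supp_fun_def
  proof (rule SUP_least)
    fix z assume "z \<in> P"
    then obtain x q where xq: "x \<in> X" "q \<in> polar (Ncone b)" "z = - Atrans a x + q"
      using memP[OF P] by blast
    have "q \<bullet> w \<le> 0" using xq(2) w unfolding polar_def by blast
    moreover have "w \<bullet> z = x \<bullet> (- Amap a w) + w \<bullet> q" unfolding xq(3) by (rule inner_P)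
    moreover have "w \<bullet> q = q \<bullet> w" "x \<bullet> (- Amap a w) = (- Amap a w) \<bullet> x" by (simp_all only: inner_commute)
    ultimately have "w \<bullet> z \<le> (- Amap a w) \<bullet> x" by linarith
    also have "ereal \<dots> \<le> (SUP x\<in>X. ereal ((- Amap a w) \<bullet> x))" using xq(1) by (rule SUP_upper)
    finally show "ereal (w \<bullet> z) \<le> (SUP x\<in>X. ereal ((- Amap a w) \<bullet> x))" by simp
  qed
  show "supp_fun X (- Amap a w) \<le> supp_fun P w"
    unfolding supp_fun_def
  proof (rule SUP_least)
    fix x assume x: "x \<in> X"
    have z: "- Atrans a x + 0 \<in> P" using memP[OF P] x polar_0 by blast
    have "(- Amap a w) \<bullet> x = w \<bullet> (- Atrans a x + 0)" by (simp only: inner_P) (simp add: inner_commute)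
    also have "ereal \<dots> \<le> (SUP z\<in>P. ereal (w \<bullet> z))" using z by (rule SUP_upper)
    finally show "ereal ((- Amap a w) \<bullet> x) \<le> (SUP z\<in>P. ereal (w \<bullet> z))" by simp
  qed
qed

lemma supp_P_notN:
  assumes P: "P = {p + q | p q. p \<in> (\<lambda>x. - Atrans a x) ` X \<and> q \<in> polar (Ncone b)}"
    and X: "X \<noteq> {}" and w: "w \<notin> Ncone b"
  shows "supp_fun P w = \<infinity>"
proof -
  obtain q where q: "q \<in> polar (Ncone b)" "w \<bullet> q > 0"
  proof (cases "\<forall>i. i \<noteq> b \<longrightarrow> 0 \<le> w $ i")
    case True
    then have s: "(\<Sum>i\<in>UNIV. w $ i) \<noteq> 0" using w unfolding Ncone_def by blast
    define c where "c = (\<Sum>i\<in>UNIV. w $ i)"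
    have "(\<chi> i. c) \<in> polar (Ncone b)"
      unfolding polar_def Ncone_def by (auto simp: inner_vec_def sum_distrib_left[symmetric])
    moreover have "w \<bullet> (\<chi> i. c) = c * c"
      by (simp add: inner_vec_def c_def sum_distrib_right mult.commute)
    moreover have "c \<noteq> 0" using s unfolding c_def by simp
    then have "c * c > 0" by (auto simp: zero_less_mult_iff linorder_neq_iff)
    ultimately show ?thesis using that by auto
  next
    case False
    then obtain i where i: "i \<noteq> b" "w $ i < 0" by force
    have "- axis i 1 \<in> polar (Ncone b)"
      unfolding polar_def Ncone_def using i(1) by (auto simp: inner_axis')
    moreover have "w \<bullet> (- axis i 1) > 0" using i(2) by (simp add: inner_axis)
    ultimately show ?thesis using that by blast
  qed
  obtain x0 where x0: "x0 \<in> X" using X by blast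
  show ?thesis
    unfolding supp_fun_def top_ereal_def[symmetric] SUP_eq_top_iff
  proof (intro allI impI)
    fix M :: ereal assume "M < top"
    then obtain m where m: "M \<le> ereal m" by (cases M) auto
    define p0 where "p0 = - Atrans a x0"
    define t where "t = (\<bar>m - w \<bullet> p0\<bar> + 1) / (w \<bullet> q)"
    have t0: "t \<ge> 0" unfolding t_def using q(2) by simp
    have "p0 + t *\<^sub>R q \<in> P" using memP[OF P] x0 polar_scale[OF q(1) t0] unfolding p0_def by blast
    moreover have "w \<bullet> (p0 + t *\<^sub>R q) = w \<bullet> p0 + \<bar>m - w \<bullet> p0\<bar> + 1"
      unfolding t_def using q(2) by (simp add: inner_add_right)
    then have "ereal m < ereal (w \<bullet> (p0 + t *\<^sub>R q))" by simp
    ultimately show "\<exists>i\<in>P. M < ereal (w \<bullet> i)" using m by (meson order.strict_trans1)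
  qed
qed


lemma ray_imp_circuit:
  assumes P: "P = {p + q | p q. p \<in> (\<lambda>x. - Atrans a x) ` X \<and> q \<in> polar (Ncone b)}"
    and \<nu>: "\<nu> \<in> Ncone b" "\<nu> \<noteq> 0" and F: "F face_of P"
    and NF: "normal_cone_face P F = {t *\<^sub>R \<nu> | t. 0 \<le> t}"
  shows "X_circuit X a b \<nu>"
proof -
  have inNF: "u \<in> normal_cone_face P F \<longleftrightarrow> (\<forall>z\<in>F. ereal (z \<bullet> u) = supp_fun P u)" for u
    unfolding normal_cone_face_def by simp
  have "F \<noteq> {}"
  proof
    assume "F = {}"
    then have "-\<nu> \<in> normal_cone_face P F" unfolding normal_cone_face_def by simp
    then obtain t where t: "-\<nu> = t *\<^sub>R \<nu>" "0 \<le> t" using NF by auto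
    have "(1 + t) *\<^sub>R \<nu> = \<nu> + t *\<^sub>R \<nu>" by (simp add: algebra_simps)
    also have "\<dots> = 0" using t(1)[symmetric] by simp
    finally have "(1 + t) *\<^sub>R \<nu> = 0" .
    then show False using \<nu>(2) t(2) by simp
  qed
  then obtain z0 where z0: "z0 \<in> F" by blast
  have "\<nu> \<in> {t *\<^sub>R \<nu> | t. 0 \<le> t}" by (rule CollectI, rule exI[of _ 1]) simp
  then have \<nu>NF: "\<nu> \<in> normal_cone_face P F" using NF by simp
  then have sv: "supp_fun P \<nu> = ereal (z0 \<bullet> \<nu>)" using z0 inNF by auto
  have fin: "supp_fun X (- Amap a \<nu>) < \<infinity>" using sv supp_P_N[OF P \<nu>(1)] by simp
  have FP: "F \<subseteq> P" using F face_of_imp_subset by blast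
  have upper: "ereal (u \<bullet> z) \<le> supp_fun P u" if "z \<in> P" for u z
    unfolding supp_fun_def using that by (rule SUP_upper)
  have nodec: False
    if \<nu>1: "\<nu>1 \<in> Ncone b" and \<nu>2: "\<nu>2 \<in> Ncone b" and t: "t \<in> {0<..<1}"
      and np: "\<not> proportional \<nu>1 \<nu>2" and eq: "\<nu> = (1 - t) *\<^sub>R \<nu>1 + t *\<^sub>R \<nu>2"
      and aff: "affine_on_segment (\<lambda>\<mu>. supp_fun X (- Amap a \<mu>)) \<nu>1 \<nu>2" for \<nu>1 \<nu>2 t
  proof -
    obtain c d where cd: "\<forall>s\<in>{0..1}. supp_fun X (- Amap a ((1 - s) *\<^sub>R \<nu>1 + s *\<^sub>R \<nu>2)) = ereal (c + s * d)"
      using aff unfolding affine_on_segment_def by blast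
    have s1: "supp_fun P \<nu>1 = ereal c" using cd[rule_format, of 0] supp_P_N[OF P \<nu>1] by simp
    have s2: "supp_fun P \<nu>2 = ereal (c + d)" using cd[rule_format, of 1] supp_P_N[OF P \<nu>2] by simp
    have st: "supp_fun P \<nu> = ereal (c + t * d)"
      using cd[rule_format, of t] t supp_P_N[OF P \<nu>(1)] eq by simp
    have both: "ereal (z \<bullet> \<nu>1) = supp_fun P \<nu>1 \<and> ereal (z \<bullet> \<nu>2) = supp_fun P \<nu>2" if z: "z \<in> F" for z
    proof -
      have zP: "z \<in> P" using z FP by blast
      have "ereal (z \<bullet> \<nu>) = supp_fun P \<nu>" using \<nu>NF z inNF by blast
      then have e: "z \<bullet> \<nu> = c + t * d" using st by simp
      have "ereal (\<nu>1 \<bullet> z) \<le> ereal c" using upper[OF zP, of \<nu>1] s1 by simp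
      then have l1: "z \<bullet> \<nu>1 \<le> c" by (simp add: inner_commute)
      have "ereal (\<nu>2 \<bullet> z) \<le> ereal (c + d)" using upper[OF zP, of \<nu>2] s2 by simp
      then have l2: "z \<bullet> \<nu>2 \<le> c + d" by (simp add: inner_commute)
      have "z \<bullet> \<nu> = (1 - t) * (z \<bullet> \<nu>1) + t * (z \<bullet> \<nu>2)" using eq by (simp add: inner_add_right)
      with e have key: "(1 - t) * (c - z \<bullet> \<nu>1) + t * ((c + d) - z \<bullet> \<nu>2) = 0"
        by (simp add: algebra_simps)
      have A: "(1 - t) * (c - z \<bullet> \<nu>1) \<ge> 0" using t l1 by (intro mult_nonneg_nonneg) auto
      have B: "t * ((c + d) - z \<bullet> \<nu>2) \<ge> 0" using t l2 by (intro mult_nonneg_nonneg) auto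
      from key A B have "(1 - t) * (c - z \<bullet> \<nu>1) = 0" "t * ((c + d) - z \<bullet> \<nu>2) = 0" by linarith+
      then have "z \<bullet> \<nu>1 = c" "z \<bullet> \<nu>2 = c + d" using t by auto
      then show ?thesis using s1 s2 by simp
    qed
    have "\<nu>1 \<in> normal_cone_face P F" "\<nu>2 \<in> normal_cone_face P F" using both inNF by auto
    then obtain t1 t2 where t12: "\<nu>1 = t1 *\<^sub>R \<nu>" "\<nu>2 = t2 *\<^sub>R \<nu>" using NF by auto
    have "proportional \<nu>1 \<nu>2"
    proof (cases "t1 = 0")
      case True
      then show ?thesis unfolding proportional_def using t12 by (auto intro: exI[of _ 0])
    next
      case False
      have "\<nu>2 = (t2 / t1) *\<^sub>R \<nu>1" using t12 False by simp
      then show ?thesis unfolding proportional_def by blast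
    qed
    with np show False by simp
  qed
  show ?thesis unfolding X_circuit_def using \<nu> fin nodec by blast
qed


lemma inner_negAt: "w \<bullet> (- Atrans a x) = x \<bullet> (- Amap a w)"
  using inner_P[of w a x 0] by simp

lemma axis_polar: "i \<noteq> b \<Longrightarrow> - axis i 1 \<in> polar (Ncone b)"
  unfolding polar_def Ncone_def by (auto simp: inner_axis')

lemma scale_eq_ray:
  assumes \<nu>: "\<nu> \<in> Ncone b" "\<nu> \<noteq> 0" and w: "w \<in> Ncone b"
    and eq: "\<alpha> *\<^sub>R \<nu> = \<beta> *\<^sub>R w" and \<beta>: "\<beta> \<noteq> 0"
  shows "\<exists>t\<ge>0. w = t *\<^sub>R \<nu>"
proof -
  have w_eq: "w = (\<alpha> / \<beta>) *\<^sub>R \<nu>"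
  proof -
    have "w = (1 / \<beta>) *\<^sub>R (\<beta> *\<^sub>R w)" using \<beta> by simp
    also have "\<dots> = (\<alpha> / \<beta>) *\<^sub>R \<nu>" using eq[symmetric] by simp
    finally show ?thesis .
  qed
  show ?thesis
  proof (cases "\<alpha> / \<beta> < 0")
    case True
    then have "\<nu> = 0" using Ncone_pointed[OF \<nu>(1) _ True] w w_eq by simp
    with \<nu>(2) show ?thesis by simp
  next
    case False
    then show ?thesis using w_eq by (intro exI[of _ "\<alpha> / \<beta>"]) simp
  qed
qed

lemma prop_ray:
  assumes \<nu>: "\<nu> \<in> Ncone b" "\<nu> \<noteq> 0" and w: "w \<in> Ncone b" and \<epsilon>: "\<epsilon> > 0"
    and pr: "proportional (\<nu> - \<epsilon> *\<^sub>R w) (\<nu> + \<epsilon> *\<^sub>R w)"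
  shows "\<exists>t\<ge>0. w = t *\<^sub>R \<nu>"
  using pr unfolding proportional_def
proof (elim disjE exE)
  fix c assume h: "\<nu> - \<epsilon> *\<^sub>R w = c *\<^sub>R (\<nu> + \<epsilon> *\<^sub>R w)"
  have "(1 - c) *\<^sub>R \<nu> - (\<epsilon> * (1 + c)) *\<^sub>R w = (\<nu> - \<epsilon> *\<^sub>R w) - c *\<^sub>R (\<nu> + \<epsilon> *\<^sub>R w)"
    by (simp add: algebra_simps)
  also have "\<dots> = 0" using h by simp
  finally have e: "(1 - c) *\<^sub>R \<nu> = (\<epsilon> * (1 + c)) *\<^sub>R w" by (simp only: right_minus_eq)
  show ?thesis
  proof (cases "1 + c = 0")
    case True
    then have "c = -1" by simp
    then have "2 *\<^sub>R \<nu> = 0" using e by simp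
    with \<nu>(2) show ?thesis by simp
  next
    case False
    then show ?thesis using scale_eq_ray[OF \<nu> w e] \<epsilon> by simp
  qed
next
  fix c assume h: "\<nu> + \<epsilon> *\<^sub>R w = c *\<^sub>R (\<nu> - \<epsilon> *\<^sub>R w)"
  have "(1 - c) *\<^sub>R \<nu> - (- \<epsilon> * (1 + c)) *\<^sub>R w = (\<nu> + \<epsilon> *\<^sub>R w) - c *\<^sub>R (\<nu> - \<epsilon> *\<^sub>R w)"
    by (simp add: algebra_simps)
  also have "\<dots> = 0" using h by simp
  finally have e: "(1 - c) *\<^sub>R \<nu> = (- \<epsilon> * (1 + c)) *\<^sub>R w" by (simp only: right_minus_eq)
  show ?thesis
  proof (cases "1 + c = 0")
    case True
    then have "c = -1" by simp
    then have "2 *\<^sub>R \<nu> = 0" using e by simp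
    with \<nu>(2) show ?thesis by simp
  next
    case False
    then show ?thesis using scale_eq_ray[OF \<nu> w e] \<epsilon> by simp
  qed
qed


lemma circuit_face:
  fixes X :: "(real^'n) set" and a :: "'m::finite \<Rightarrow> real^'n" and b :: 'm
  assumes P: "P = {p + q | p q. p \<in> (\<lambda>x. - Atrans a x) ` X \<and> q \<in> polar (Ncone b)}"
    and X: "polyhedron X" "X \<noteq> {}" and circ: "X_circuit X a b \<nu>"
  defines "F \<equiv> {p\<in>P. \<forall>p'\<in>P. \<nu> \<bullet> p' \<le> \<nu> \<bullet> p}"
  shows "F face_of P \<and> normal_cone_face P F = {t *\<^sub>R \<nu> | t. 0 \<le> t} \<and>
         (\<exists>G Q. G face_of X \<and> Q face_of polar (Ncone b) \<and> F = {- Atrans a x + q | x q. x \<in> G \<and> q \<in> Q})"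
proof -
  have \<nu>N: "\<nu> \<in> Ncone b" and \<nu>0: "\<nu> \<noteq> 0" and fin: "supp_fun X (- Amap a \<nu>) < \<infinity>"
    using circ unfolding X_circuit_def by (blast, blast, blast)
  have nodec: "\<not> (\<exists>\<nu>1 \<in> Ncone b. \<exists>\<nu>2 \<in> Ncone b. \<exists>t\<in>{0<..<1}.
            \<not> proportional \<nu>1 \<nu>2 \<and> \<nu> = (1 - t) *\<^sub>R \<nu>1 + t *\<^sub>R \<nu>2 \<and>
            affine_on_segment (\<lambda>\<mu>. supp_fun X (- Amap a \<mu>)) \<nu>1 \<nu>2)"
    using circ unfolding X_circuit_def by (elim conjE)
  define y where "y = - Amap a \<nu>"
  obtain m where "\<forall>x\<in>X. y \<bullet> x \<le> m" using supp_bdd[OF X(2) fin] unfolding y_def by blast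
  then obtain z where z: "z \<in> X" and zmax: "\<forall>x\<in>X. y \<bullet> x \<le> y \<bullet> z"
    using attain_bdd[OF X] by blast
  define M where "M = y \<bullet> z"
  have innP: "\<nu> \<bullet> (- Atrans a x + q) = y \<bullet> x + \<nu> \<bullet> q" for x q
  proof -
    have "x \<bullet> (- Amap a \<nu>) = y \<bullet> x" unfolding y_def by (rule inner_commute)
    then show ?thesis using inner_P[of \<nu> a x q] by simp
  qed
  have qle: "\<nu> \<bullet> q \<le> 0" if "q \<in> polar (Ncone b)" for q
  proof -
    have "\<forall>\<nu>\<in>Ncone b. q \<bullet> \<nu> \<le> 0" using that unfolding polar_def by simp
    then have "q \<bullet> \<nu> \<le> 0" using \<nu>N by blast
    moreover have "\<nu> \<bullet> q = q \<bullet> \<nu>" by (rule inner_commute)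
    ultimately show ?thesis by linarith
  qed
  have Pbound: "\<nu> \<bullet> p \<le> M" if pP: "p \<in> P" for p
  proof -
    obtain x q where xq: "x \<in> X" "q \<in> polar (Ncone b)" "p = - Atrans a x + q"
      using memP[OF P, THEN iffD1, OF pP] by blast
    have "y \<bullet> x \<le> y \<bullet> z" using zmax xq(1) by blast
    moreover have "\<nu> \<bullet> p = y \<bullet> x + \<nu> \<bullet> q" unfolding xq(3) by (rule innP)
    ultimately show ?thesis using qle[OF xq(2)] unfolding M_def by linarith
  qed
  define p0 where "p0 = - Atrans a z"
  have p0P: "p0 \<in> P" using memP_I[OF P z polar_0] unfolding p0_def by simp
  have p0M: "\<nu> \<bullet> p0 = M" using innP[of z 0] unfolding p0_def M_def by simp
  have Fchar: "p \<in> F \<longleftrightarrow> p \<in> P \<and> \<nu> \<bullet> p = M" for p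
    unfolding F_def using Pbound p0P p0M by (auto intro: antisym)
  have FP: "F = P \<inter> {p. \<nu> \<bullet> p = M}" using Fchar by blast
  have cxP: "convex P" using convex_P[OF P polyhedron_imp_convex[OF X(1)]] .
  have face: "F face_of P" unfolding FP
    by (rule face_of_Int_supporting_hyperplane_le[OF cxP]) (use Pbound in blast)
  define G where "G = X \<inter> {x. y \<bullet> x = M}"
  define Q where "Q = polar (Ncone b) \<inter> {q. \<nu> \<bullet> q = 0}"
  have Gface: "G face_of X" unfolding G_def
    by (rule face_of_Int_supporting_hyperplane_le[OF polyhedron_imp_convex[OF X(1)]])
       (use zmax M_def in blast)
  have Qface: "Q face_of polar (Ncone b)" unfolding Q_def
    by (rule face_of_Int_supporting_hyperplane_le[OF polar_convex]) (use qle in blast)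
  have Fdec: "F = {- Atrans a x + q | x q. x \<in> G \<and> q \<in> Q}"
  proof
    show "F \<subseteq> {- Atrans a x + q | x q. x \<in> G \<and> q \<in> Q}"
    proof
      fix p assume "p \<in> F"
      then have pP: "p \<in> P" and pM: "\<nu> \<bullet> p = M" using Fchar by auto
      obtain x q where xq: "x \<in> X" "q \<in> polar (Ncone b)" "p = - Atrans a x + q"
        using memP_E[OF P pP] by blast
      have "y \<bullet> x \<le> M" using zmax xq(1) M_def by blast
      moreover have "\<nu> \<bullet> q \<le> 0" using qle xq(2) .
      moreover have "y \<bullet> x + \<nu> \<bullet> q = M" using pM innP xq(3) by simp
      ultimately have "y \<bullet> x = M" "\<nu> \<bullet> q = 0" by linarith+
      then show "p \<in> {- Atrans a x + q | x q. x \<in> G \<and> q \<in> Q}"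
        using xq unfolding G_def Q_def by blast
    qed
    show "{- Atrans a x + q | x q. x \<in> G \<and> q \<in> Q} \<subseteq> F"
    proof clarify
      fix x q assume x: "x \<in> G" and q: "q \<in> Q"
      have "- Atrans a x + q \<in> P" using x q unfolding G_def Q_def by (intro memP_I[OF P]) auto
      moreover have "\<nu> \<bullet> (- Atrans a x + q) = M" using innP x q unfolding G_def Q_def by simp
      ultimately show "- Atrans a x + q \<in> F" using Fchar by blast
    qed
  qed
  have inNF: "u \<in> normal_cone_face P F \<longleftrightarrow> (\<forall>p\<in>F. ereal (p \<bullet> u) = supp_fun P u)" for u
    unfolding normal_cone_face_def by simp
  have NF: "normal_cone_face P F = {t *\<^sub>R \<nu> | t. 0 \<le> t}"
  proof
    show "{t *\<^sub>R \<nu> | t. 0 \<le> t} \<subseteq> normal_cone_face P F"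
    proof clarify
      fix t :: real assume t: "0 \<le> t"
      show "t *\<^sub>R \<nu> \<in> normal_cone_face P F"
        unfolding inNF
      proof
        fix p assume pF: "p \<in> F"
        then have pP: "p \<in> P" and pM: "\<nu> \<bullet> p = M" using Fchar by auto
        have "supp_fun P (t *\<^sub>R \<nu>) = ereal ((t *\<^sub>R \<nu>) \<bullet> p)"
          unfolding supp_fun_def
        proof (rule SUP_attain[OF pP], intro ballI)
          fix p' assume "p' \<in> P"
          then have "\<nu> \<bullet> p' \<le> \<nu> \<bullet> p" using Pbound pM by simp
          then show "(t *\<^sub>R \<nu>) \<bullet> p' \<le> (t *\<^sub>R \<nu>) \<bullet> p" using t by (simp add: mult_left_mono)
        qed
        then show "ereal (p \<bullet> (t *\<^sub>R \<nu>)) = supp_fun P (t *\<^sub>R \<nu>)" by (simp add: inner_commute)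
      qed
    qed
    show "normal_cone_face P F \<subseteq> {t *\<^sub>R \<nu> | t. 0 \<le> t}"
    proof
      fix w assume wNF: "w \<in> normal_cone_face P F"
      have p0F: "p0 \<in> F" using Fchar p0P p0M by blast
      have wF: "ereal (p \<bullet> w) = supp_fun P w" if "p \<in> F" for p using wNF inNF that by blast
      have sw: "supp_fun P w = ereal (p0 \<bullet> w)" using wF[OF p0F] by simp
      have wN: "w \<in> Ncone b"
      proof (rule ccontr)
        assume "w \<notin> Ncone b"
        then have "supp_fun P w = \<infinity>" using supp_P_notN[OF P X(2)] by blast
        with sw show False by simp
      qed
      define d where "d = - Amap a w"
      have p0w: "p0 \<bullet> w = d \<bullet> z"
        unfolding p0_def d_def using inner_negAt[of w a z] by (simp add: inner_commute)
      have swX: "supp_fun X d = ereal (d \<bullet> z)"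
        using supp_P_N[OF P wN] sw p0w unfolding d_def by simp
      have dmax: "\<forall>x\<in>X. d \<bullet> x \<le> d \<bullet> z"
      proof
        fix x assume "x \<in> X"
        then have "ereal (d \<bullet> x) \<le> supp_fun X d" unfolding supp_fun_def by (rule SUP_upper)
        then show "d \<bullet> x \<le> d \<bullet> z" using swX by simp
      qed
      have yd: "\<forall>x\<in>X. y \<bullet> x = y \<bullet> z \<longrightarrow> d \<bullet> x = d \<bullet> z"
      proof (intro ballI impI)
        fix x assume x: "x \<in> X" and yx: "y \<bullet> x = y \<bullet> z"
        have "- Atrans a x \<in> P" using memP_I[OF P x polar_0] by simp
        moreover have "\<nu> \<bullet> (- Atrans a x) = M" using innP[of x 0] yx M_def by simp
        ultimately have "- Atrans a x \<in> F" using Fchar by blast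
        then have "ereal ((- Atrans a x) \<bullet> w) = ereal (p0 \<bullet> w)" using wF[OF \<open>- Atrans a x \<in> F\<close>] sw by simp
        then have "(- Atrans a x) \<bullet> w = d \<bullet> z" using p0w by simp
        moreover have "(- Atrans a x) \<bullet> w = d \<bullet> x"
          unfolding d_def using inner_negAt[of w a x] by (simp add: inner_commute)
        ultimately show "d \<bullet> x = d \<bullet> z" by simp
      qed
      obtain e1 where e1: "e1 > 0"
        "\<forall>\<epsilon>. 0 < \<epsilon> \<and> \<epsilon> \<le> e1 \<longrightarrow> (\<forall>x\<in>X. (y - \<epsilon> *\<^sub>R d) \<bullet> x \<le> (y - \<epsilon> *\<^sub>R d) \<bullet> z)"
        using core[OF X(1) z zmax dmax yd] by blast
      have wi: "w $ i = 0" if i: "i \<noteq> b" "\<nu> $ i = 0" for i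
      proof -
        define q where "q = - axis i (1::real)"
        have qP: "q \<in> polar (Ncone b)" unfolding q_def using axis_polar[OF i(1)] .
        have "p0 + q \<in> P" using memP_I[OF P z qP] unfolding p0_def .
        moreover have "\<nu> \<bullet> (p0 + q) = M" using p0M i(2) unfolding q_def
          by (simp add: inner_add_right inner_diff_right inner_axis)
        ultimately have "p0 + q \<in> F" using Fchar by blast
        then have "ereal ((p0 + q) \<bullet> w) = ereal (p0 \<bullet> w)" using wF[OF \<open>p0 + q \<in> F\<close>] sw by simp
        then have "q \<bullet> w = 0" by (simp add: inner_add_left)
        then show ?thesis unfolding q_def by (simp add: inner_axis')
      qed
      have condI: "- \<nu> $ i \<le> 0 \<and> - w $ i \<le> 0 \<and> (- \<nu> $ i = 0 \<longrightarrow> - w $ i = 0)" if "i \<in> {i. i \<noteq> b}" for i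
        using that \<nu>N wN wi unfolding Ncone_def by auto
      obtain e2 where e2: "e2 > 0"
        "\<forall>\<epsilon>. 0 < \<epsilon> \<and> \<epsilon> \<le> e2 \<longrightarrow> (\<forall>i\<in>{i. i \<noteq> b}. - \<nu> $ i - \<epsilon> * (- w $ i) \<le> 0)"
        using eps_pick[of "{i. i \<noteq> b}" "\<lambda>i. - \<nu> $ i" "\<lambda>i. - w $ i", OF finite condI] by blast
      define \<epsilon> where "\<epsilon> = min e1 e2"
      have \<epsilon>0: "\<epsilon> > 0" and \<epsilon>1: "\<epsilon> \<le> e1" and \<epsilon>2: "\<epsilon> \<le> e2" using e1 e2 unfolding \<epsilon>_def by auto
      define \<nu>1 where "\<nu>1 = \<nu> - \<epsilon> *\<^sub>R w"
      define \<nu>2 where "\<nu>2 = \<nu> + \<epsilon> *\<^sub>R w"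
      have \<nu>1N: "\<nu>1 \<in> Ncone b"
      proof -
        have "\<forall>i. i \<noteq> b \<longrightarrow> 0 \<le> \<nu>1 $ i" using e2(2) \<epsilon>0 \<epsilon>2 unfolding \<nu>1_def by auto
        moreover have "(\<Sum>i\<in>UNIV. \<nu>1 $ i) = 0"
          using \<nu>N wN unfolding \<nu>1_def Ncone_def by (simp add: sum_subtractf sum_distrib_left[symmetric])
        ultimately show ?thesis unfolding Ncone_def by blast
      qed
      have \<nu>2N: "\<nu>2 \<in> Ncone b" unfolding \<nu>2_def
        using Ncone_add[OF \<nu>N Ncone_scale[OF wN]] \<epsilon>0 by simp
      have half: "\<nu> = (1 - 1/2) *\<^sub>R \<nu>1 + (1/2) *\<^sub>R \<nu>2"
      proof -
        have "(1 - 1/2) *\<^sub>R \<nu>1 + (1/2) *\<^sub>R \<nu>2 = (1/2::real) *\<^sub>R (\<nu>1 + \<nu>2)"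
          by (simp add: scaleR_add_right)
        also have "\<nu>1 + \<nu>2 = 2 *\<^sub>R \<nu>" unfolding \<nu>1_def \<nu>2_def scaleR_2 by simp
        finally show ?thesis by simp
      qed
      have lin: "- Amap a (\<nu> + k *\<^sub>R w) = y + k *\<^sub>R d" for k
        unfolding y_def d_def using Amap_lin[of a \<nu> k w] by simp
      have affs: "\<forall>s\<in>{0..1}. supp_fun X (- Amap a ((1 - s) *\<^sub>R \<nu>1 + s *\<^sub>R \<nu>2)) =
            ereal (M - \<epsilon> * (d \<bullet> z) + s * (2 * \<epsilon> * (d \<bullet> z)))"
      proof
        fix s :: real assume s: "s \<in> {0..1}"
        define k where "k = (2 * s - 1) * \<epsilon>"
        have u: "(1 - s) *\<^sub>R \<nu>1 + s *\<^sub>R \<nu>2 = \<nu> + k *\<^sub>R w"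
          unfolding \<nu>1_def \<nu>2_def k_def by (simp add: vec_eq_iff algebra_simps)
        have maxk: "\<forall>x\<in>X. (y + k *\<^sub>R d) \<bullet> x \<le> (y + k *\<^sub>R d) \<bullet> z"
        proof
          fix x assume x: "x \<in> X"
          show "(y + k *\<^sub>R d) \<bullet> x \<le> (y + k *\<^sub>R d) \<bullet> z"
          proof (cases "k \<ge> 0")
            case True
            have "k * (d \<bullet> x) \<le> k * (d \<bullet> z)" using True dmax x by (simp add: mult_left_mono)
            moreover have "y \<bullet> x \<le> y \<bullet> z" using zmax x by blast
            ultimately show ?thesis by (simp add: inner_add_left)
          next
            case False
            have "0 < - k" using False by simp
            have "- k = (1 - 2 * s) * \<epsilon>" unfolding k_def by (simp add: algebra_simps)
            also have "\<dots> \<le> 1 * \<epsilon>" using s \<epsilon>0 by (intro mult_right_mono) auto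
            finally have "- k \<le> e1" using \<epsilon>1 by simp
            have "(y - (- k) *\<^sub>R d) \<bullet> x \<le> (y - (- k) *\<^sub>R d) \<bullet> z"
              using e1(2) x \<open>0 < - k\<close> \<open>- k \<le> e1\<close> by blast
            then show ?thesis by simp
          qed
        qed
        have "supp_fun X (- Amap a ((1 - s) *\<^sub>R \<nu>1 + s *\<^sub>R \<nu>2)) = supp_fun X (y + k *\<^sub>R d)"
          using u lin by simp
        also have "\<dots> = ereal ((y + k *\<^sub>R d) \<bullet> z)"
          unfolding supp_fun_def by (rule SUP_attain[OF z maxk])
        also have "\<dots> = ereal (M - \<epsilon> * (d \<bullet> z) + s * (2 * \<epsilon> * (d \<bullet> z)))"
          unfolding k_def M_def by (simp add: inner_add_left algebra_simps)
        finally show "supp_fun X (- Amap a ((1 - s) *\<^sub>R \<nu>1 + s *\<^sub>R \<nu>2)) =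
            ereal (M - \<epsilon> * (d \<bullet> z) + s * (2 * \<epsilon> * (d \<bullet> z)))" .
      qed
      have aff: "affine_on_segment (\<lambda>\<mu>. supp_fun X (- Amap a \<mu>)) \<nu>1 \<nu>2"
        unfolding affine_on_segment_def using affs by blast
      have "proportional \<nu>1 \<nu>2"
      proof (rule ccontr)
        assume "\<not> proportional \<nu>1 \<nu>2"
        moreover have "(1/2::real) \<in> {0<..<1}" by simp
        ultimately show False using nodec \<nu>1N \<nu>2N half aff by blast
      qed
      then obtain t where "t \<ge> 0" "w = t *\<^sub>R \<nu>"
        using prop_ray[OF \<nu>N \<nu>0 wN \<epsilon>0] unfolding \<nu>1_def \<nu>2_def by blast
      then show "w \<in> {t *\<^sub>R \<nu> | t. 0 \<le> t}" by blast
    qed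
  qed
  show ?thesis using face NF Gface Qface Fdec by blast
qed


theorem theorem3p7:
  fixes X :: "(real^'n) set" and a :: "'m::finite \<Rightarrow> real^'n" and b :: 'm
  assumes "polyhedron X" and "X \<noteq> {}" and "inj a"
  defines "P \<equiv> {p + q | p q. p \<in> (\<lambda>x. - Atrans a x) ` X \<and> q \<in> polar (Ncone b)}"
  shows "(\<forall>\<nu> \<in> Ncone b - {0}.
            X_circuit X a b \<nu> \<longleftrightarrow> {t *\<^sub>R \<nu> | t. 0 \<le> t} \<in> outer_normal_fan P)
         \<and> finite {l. X_circuit X a b l \<and> l $ b = -1}"
proof -
  have Pd: "P = {p + q | p q. p \<in> (\<lambda>x. - Atrans a x) ` X \<and> q \<in> polar (Ncone b)}"
    unfolding P_def by simp
  define Fm where "Fm l = {p\<in>P. \<forall>p'\<in>P. l \<bullet> p' \<le> l \<bullet> p}" for l :: "real^'m"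
  have CF: "Fm l face_of P \<and> normal_cone_face P (Fm l) = {t *\<^sub>R l | t. 0 \<le> t} \<and>
         (\<exists>G Q. G face_of X \<and> Q face_of polar (Ncone b) \<and> Fm l = {- Atrans a x + q | x q. x \<in> G \<and> q \<in> Q})"
    if "X_circuit X a b l" for l
    unfolding Fm_def by (rule circuit_face[OF Pd assms(1,2) that])
  have part1: "\<forall>\<nu> \<in> Ncone b - {0}.
            X_circuit X a b \<nu> \<longleftrightarrow> {t *\<^sub>R \<nu> | t. 0 \<le> t} \<in> outer_normal_fan P"
  proof
    fix \<nu> assume \<nu>: "\<nu> \<in> Ncone b - {0}"
    show "X_circuit X a b \<nu> \<longleftrightarrow> {t *\<^sub>R \<nu> | t. 0 \<le> t} \<in> outer_normal_fan P"
    proof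
      assume c: "X_circuit X a b \<nu>"
      have f1: "Fm \<nu> face_of P" using conjunct1[OF CF[OF c]] .
      have f2: "normal_cone_face P (Fm \<nu>) = {t *\<^sub>R \<nu> | t. 0 \<le> t}"
        using conjunct1[OF conjunct2[OF CF[OF c]]] .
      have "\<exists>F. {t *\<^sub>R \<nu> | t. 0 \<le> t} = normal_cone_face P F \<and> F face_of P"
        using f1 f2[symmetric] by (intro exI[of _ "Fm \<nu>"] conjI)
      then show "{t *\<^sub>R \<nu> | t. 0 \<le> t} \<in> outer_normal_fan P"
        unfolding outer_normal_fan_def by (simp only: mem_Collect_eq)
    next
      assume "{t *\<^sub>R \<nu> | t. 0 \<le> t} \<in> outer_normal_fan P"
      then have "\<exists>F. {t *\<^sub>R \<nu> | t. 0 \<le> t} = normal_cone_face P F \<and> F face_of P"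
        unfolding outer_normal_fan_def by (simp only: mem_Collect_eq)
      then obtain F where F1: "{t *\<^sub>R \<nu> | t. 0 \<le> t} = normal_cone_face P F" and F2: "F face_of P"
        by (elim exE conjE)
      have \<nu>1: "\<nu> \<in> Ncone b" and \<nu>2: "\<nu> \<noteq> 0" using \<nu> by simp_all
      show "X_circuit X a b \<nu>"
        by (rule ray_imp_circuit[OF Pd \<nu>1 \<nu>2 F2 F1[symmetric]])
    qed
  qed
  let ?S = "{l. X_circuit X a b l \<and> l $ b = -1}"
  let ?h = "\<lambda>(G, Q). {- Atrans a x + q | x q. x \<in> G \<and> q \<in> Q}"
  have inj: "inj_on Fm ?S"
  proof (rule inj_onI)
    fix l l' assume l: "l \<in> ?S" and l': "l' \<in> ?S" and eq: "Fm l = Fm l'"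
    have cl: "X_circuit X a b l" and cl': "X_circuit X a b l'" using l l' by simp_all
    have "{t *\<^sub>R l | t. 0 \<le> t} = normal_cone_face P (Fm l)"
      using conjunct1[OF conjunct2[OF CF[OF cl]]] by (rule sym)
    also have "\<dots> = {t *\<^sub>R l' | t. 0 \<le> t}"
      unfolding eq by (rule conjunct1[OF conjunct2[OF CF[OF cl']]])
    finally have "{t *\<^sub>R l | t. 0 \<le> t} = {t *\<^sub>R l' | t. 0 \<le> t}" .
    moreover have "l' \<in> {t *\<^sub>R l' | t. 0 \<le> t}" by (rule CollectI, rule exI[of _ 1]) simp
    ultimately obtain t where t: "l' = t *\<^sub>R l" by blast
    then have "l' $ b = t * l $ b" by simp
    then have "t = 1" using l l' by simp
    then show "l = l'" using t by simp
  qed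
  have sub: "Fm ` ?S \<subseteq> ?h ` ({G. G face_of X} \<times> {Q. Q face_of polar (Ncone b)})"
  proof
    fix F assume "F \<in> Fm ` ?S"
    then obtain l where l: "l \<in> ?S" "F = Fm l" by blast
    then have cl: "X_circuit X a b l" by simp
    obtain G Q where "G face_of X" "Q face_of polar (Ncone b)"
      "Fm l = {- Atrans a x + q | x q. x \<in> G \<and> q \<in> Q}"
      using conjunct2[OF conjunct2[OF CF[OF cl]]] by (elim exE conjE)
    then show "F \<in> ?h ` ({G. G face_of X} \<times> {Q. Q face_of polar (Ncone b)})"
      using l(2) by (intro image_eqI[of _ _ "(G, Q)"]) auto
  qed
  have "finite ({G. G face_of X} \<times> {Q. Q face_of polar (Ncone b)})"
    using finite_polyhedron_faces[OF assms(1)] finite_polyhedron_faces[OF polyhedron_polar_Ncone]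
    by blast
  then have "finite (?h ` ({G. G face_of X} \<times> {Q. Q face_of polar (Ncone b)}))" by blast
  then have "finite ?S" using inj_on_finite[OF inj sub] by blast
  with part1 show ?thesis by blast
qed

end
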